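(* Let $E$ be a contact Riemannian Lie algebroid with associated almost contact Riemannian structure $(F_E,\xi,\eta,g_E)$, and let $\nabla$ be the Levi-Civita connection of $g_E$. Then: (i) $N_E^{(2)}=0$ and $N_E^{(4)}=0$; (ii) $N_E^{(3)}=0$ if and only if $\xi$ is a Killing section, i.e. $\mathcal{L}_\xi g_E=0$; (iii) $\nabla_\xi F_E=0$.
   Context: A Lie algebroid $(E,\rho_E,[\cdot,\cdot]_E)$ over $M$ is a vector bundle with anchor $\rho_E:E\to TM$ and Lie bracket on $\Gamma(E)$ with $[s_1,fs_2]_E=f[s_1,s_2]_E+\rho_E(s_1)(f)s_2$. For a 1-form $\eta$, $(d_E\eta)(s_1,s_2)=\frac12\{\rho_E(s_1)(\eta(s_2))-\rho_E(s_2)(\eta(s_1))-\eta([s_1,s_2]_E)\}$. For $E$ of rank $2m+1$, an almost contact Riemannian structure $(F_E,\xi,\eta,g_E)$: endomorphism $F_E$, $\xi\in\Gamma(E)$, $\eta\in\Gamma(E^* )$, bundle metric $g_E$, with $F_E^2=-I_E+\eta\otimes\xi$, $\eta(\xi)=1$, $g_E(F_Es_1,F_Es_2)=g_E(s_1,s_2)-\eta(s_1)\eta(s_2)$; fundamental form $\Omega_E(s_1,s_2)=g_E(s_1,F_Es_2)$. $E$ is contact Riemannian if also $\eta\wedge(d_E\eta)^m$ vanishes nowhere and $d_E\eta=\Omega_E$. Lie derivatives along $s\in\Gamma(E)$: $(\mathcal{L}_s\eta)(s')=\rho_E(s)(\eta(s'))-\eta([s,s']_E)$; $(\mathcal{L}_sF_E)(s')=[s,F_Es']_E-F_E[s,s']_E$;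 $(\mathcal{L}_sg_E)(s_1,s_2)=\rho_E(s)(g_E(s_1,s_2))-g_E([s,s_1]_E,s_2)-g_E(s_1,[s,s_2]_E)$. Define $N_E^{(2)}(s_1,s_2)=(\mathcal{L}_{F_E(s_1)}\eta)(s_2)-(\mathcal{L}_{F_E(s_2)}\eta)(s_1)$, $N_E^{(3)}=\frac12\mathcal{L}_\xi F_E$, $N_E^{(4)}=\mathcal{L}_\xi\eta$. The Levi-Civita connection $\nabla$ is the unique $E$-connection ($\nabla_{fs}s'=f\nabla_ss'$, $\nabla_s(fs')=f\nabla_ss'+\rho_E(s)(f)s'$) that is torsion-free ($\nabla_{s_1}s_2-\nabla_{s_2}s_1=[s_1,s_2]_E$) and metric ($\rho_E(s)(g_E(s_1,s_2))=g_E(\nabla_ss_1,s_2)+g_E(s_1,\nabla_ss_2)$); $(\nabla_sF_E)s'=\nabla_s(F_Es')-F_E(\nabla_ss')$. *)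

theory Defs
  imports Complex_Main "HOL-Combinatorics.Permutations"
begin

text \<open>The base manifold M is the type 'm. The vector bundle E is given by
 its fibres Efib x, subspaces of a fixed real vector space 'v (every vector bundle
 embeds in a trivial bundle). Smooth functions form the set C of real functions on M;
 smooth sections form the set Sec of maps s with s x in Efib x.
 The anchor is given pointwise: rho x v is the tangent vector (a derivation at x
 on the smooth functions) which is the image of v in Efib x.\<close>

definition smul :: "('m \<Rightarrow> real) \<Rightarrow> ('m \<Rightarrow> 'v::real_vector) \<Rightarrow> 'm \<Rightarrow> 'v" where
  "smul f s = (\<lambda>x. f x *\<^sub>R s x)"

definition anc :: "('m \<Rightarrow> 'v \<Rightarrow> ('m \<Rightarrow> real) \<Rightarrow> real) \<Rightarrow> ('m \<Rightarrow> 'v) \<Rightarrow> ('m \<Rightarrow> real) \<Rightarrow> 'm \<Rightarrow> real" where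
  "anc rho s f = (\<lambda>x. rho x (s x) f)"

definition vector_bundle ::
  "('m \<Rightarrow> real) set \<Rightarrow> ('m \<Rightarrow> 'v::real_vector set) \<Rightarrow> ('m \<Rightarrow> 'v) set \<Rightarrow> nat \<Rightarrow> bool" where
  "vector_bundle C Efib Sec n \<longleftrightarrow>
     (\<forall>c. (\<lambda>_. c) \<in> C) \<and>
     (\<forall>f\<in>C. \<forall>g\<in>C. (\<lambda>x. f x + g x) \<in> C \<and> (\<lambda>x. f x * g x) \<in> C) \<and>
     (\<forall>x. subspace (Efib x) \<and> dim (Efib x) = n) \<and>
     (\<forall>s\<in>Sec. \<forall>x. s x \<in> Efib x) \<and>
     (\<lambda>_. 0) \<in> Sec \<and>
     (\<forall>s\<in>Sec. \<forall>s'\<in>Sec. (\<lambda>x. s x + s' x) \<in> Sec) \<and>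
     (\<forall>f\<in>C. \<forall>s\<in>Sec. smul f s \<in> Sec) \<and>
     (\<forall>x. \<forall>v\<in>Efib x. \<exists>s\<in>Sec. s x = v)"

definition lie_algebroid ::
  "('m \<Rightarrow> real) set \<Rightarrow> ('m \<Rightarrow> 'v::real_vector set) \<Rightarrow> ('m \<Rightarrow> 'v) set \<Rightarrow> nat
   \<Rightarrow> ('m \<Rightarrow> 'v \<Rightarrow> ('m \<Rightarrow> real) \<Rightarrow> real)
   \<Rightarrow> (('m \<Rightarrow> 'v) \<Rightarrow> ('m \<Rightarrow> 'v) \<Rightarrow> ('m \<Rightarrow> 'v)) \<Rightarrow> bool" where
  "lie_algebroid C Efib Sec n rho br \<longleftrightarrow>
     vector_bundle C Efib Sec n \<and>
     \<comment> \<open>anchor: fibrewise linear bundle map into tangent vectors (derivations at x)\<close>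
     (\<forall>x. \<forall>v\<in>Efib x. \<forall>w\<in>Efib x. \<forall>a. \<forall>f\<in>C.
         rho x (a *\<^sub>R v + w) f = a * rho x v f + rho x w f) \<and>
     (\<forall>x. \<forall>v\<in>Efib x. \<forall>f\<in>C. \<forall>g\<in>C. \<forall>a.
         rho x v (\<lambda>y. a * f y + g y) = a * rho x v f + rho x v g \<and>
         rho x v (\<lambda>y. f y * g y) = f x * rho x v g + g x * rho x v f) \<and>
     (\<forall>s\<in>Sec. \<forall>f\<in>C. anc rho s f \<in> C) \<and>
     \<comment> \<open>bracket: real Lie bracket on sections with the Leibniz rule\<close>
     (\<forall>s1\<in>Sec. \<forall>s2\<in>Sec. br s1 s2 \<in> Sec) \<and>
     (\<forall>s1\<in>Sec. \<forall>s2\<in>Sec. \<forall>s3\<in>Sec. \<forall>a.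
         br (\<lambda>x. a *\<^sub>R s1 x + s2 x) s3 = (\<lambda>x. a *\<^sub>R br s1 s3 x + br s2 s3 x)) \<and>
     (\<forall>s1\<in>Sec. \<forall>s2\<in>Sec. br s1 s2 = (\<lambda>x. - br s2 s1 x)) \<and>
     (\<forall>s1\<in>Sec. \<forall>s2\<in>Sec. \<forall>s3\<in>Sec.
         (\<lambda>x. br s1 (br s2 s3) x + br s2 (br s3 s1) x + br s3 (br s1 s2) x) = (\<lambda>_. 0)) \<and>
     (\<forall>s1\<in>Sec. \<forall>s2\<in>Sec. \<forall>f\<in>C.
         br s1 (smul f s2) = (\<lambda>x. f x *\<^sub>R br s1 s2 x + anc rho s1 f x *\<^sub>R s2 x))"

definition almost_contact_riemannian ::
  "('m \<Rightarrow> real) set \<Rightarrow> ('m \<Rightarrow> 'v::real_vector set) \<Rightarrow> ('m \<Rightarrow> 'v) set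
   \<Rightarrow> ('m \<Rightarrow> 'v \<Rightarrow> 'v) \<Rightarrow> ('m \<Rightarrow> 'v) \<Rightarrow> ('m \<Rightarrow> 'v \<Rightarrow> real) \<Rightarrow> ('m \<Rightarrow> 'v \<Rightarrow> 'v \<Rightarrow> real) \<Rightarrow> bool" where
  "almost_contact_riemannian C Efib Sec F xi eta g \<longleftrightarrow>
     \<comment> \<open>smooth tensor fields\<close>
     (\<forall>x. \<forall>v\<in>Efib x. \<forall>w\<in>Efib x. \<forall>a.
        F x v \<in> Efib x \<and> F x (a *\<^sub>R v + w) = a *\<^sub>R F x v + F x w \<and>
        eta x (a *\<^sub>R v + w) = a * eta x v + eta x w \<and>
        (\<forall>u\<in>Efib x. g x (a *\<^sub>R v + w) u = a * g x v u + g x w u) \<and>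
        g x v w = g x w v) \<and>
     (\<forall>x. \<forall>v\<in>Efib x. v \<noteq> 0 \<longrightarrow> g x v v > 0) \<and>
     xi \<in> Sec \<and>
     (\<forall>s\<in>Sec. (\<lambda>x. F x (s x)) \<in> Sec \<and> (\<lambda>x. eta x (s x)) \<in> C) \<and>
     (\<forall>s1\<in>Sec. \<forall>s2\<in>Sec. (\<lambda>x. g x (s1 x) (s2 x)) \<in> C) \<and>
     \<comment> \<open>the almost contact metric identities\<close>
     (\<forall>x. \<forall>v\<in>Efib x. F x (F x v) = - v + eta x v *\<^sub>R xi x) \<and>
     (\<forall>x. eta x (xi x) = 1) \<and>
     (\<forall>x. \<forall>v\<in>Efib x. \<forall>w\<in>Efib x. g x (F x v) (F x w) = g x v w - eta x v * eta x w)"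

definition fundamental_form :: "('m \<Rightarrow> 'v \<Rightarrow> 'v) \<Rightarrow> ('m \<Rightarrow> 'v \<Rightarrow> 'v \<Rightarrow> real) \<Rightarrow> 'm \<Rightarrow> 'v \<Rightarrow> 'v \<Rightarrow> real" where
  "fundamental_form F g x v w = g x v (F x w)"

text \<open>Exterior derivative of a 1-form on sections (with the paper's factor 1/2).\<close>
definition dE :: "('m \<Rightarrow> 'v \<Rightarrow> ('m \<Rightarrow> real) \<Rightarrow> real) \<Rightarrow> (('m \<Rightarrow> 'v) \<Rightarrow> ('m \<Rightarrow> 'v) \<Rightarrow> ('m \<Rightarrow> 'v))
   \<Rightarrow> ('m \<Rightarrow> 'v \<Rightarrow> real) \<Rightarrow> ('m \<Rightarrow> 'v) \<Rightarrow> ('m \<Rightarrow> 'v) \<Rightarrow> 'm \<Rightarrow> real" where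
  "dE rho br eta s1 s2 = (\<lambda>x. (1/2) * (anc rho s1 (\<lambda>y. eta y (s2 y)) x
       - anc rho s2 (\<lambda>y. eta y (s1 y)) x - eta x (br s1 s2 x)))"

text \<open>The (2m+1)-form eta /\ (d eta)^m evaluated on sections ss 0, ..., ss (2m), as the
 total alternation of eta (x) d eta (x) ... (x) d eta; this agrees with the wedge product
 up to a positive constant factor (irrelevant for vanishing).\<close>
definition eta_wedge_deta_pow ::
  "('m \<Rightarrow> 'v \<Rightarrow> ('m \<Rightarrow> real) \<Rightarrow> real) \<Rightarrow> (('m \<Rightarrow> 'v) \<Rightarrow> ('m \<Rightarrow> 'v) \<Rightarrow> ('m \<Rightarrow> 'v))
   \<Rightarrow> ('m \<Rightarrow> 'v \<Rightarrow> real) \<Rightarrow> nat \<Rightarrow> (nat \<Rightarrow> ('m \<Rightarrow> 'v)) \<Rightarrow> 'm \<Rightarrow> real" where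
  "eta_wedge_deta_pow rho br eta m ss = (\<lambda>x.
     \<Sum>p\<in>{p. p permutes {..<2*m+1}}. of_int (sign p) * eta x (ss (p 0) x) *
        (\<Prod>i<m. dE rho br eta (ss (p (2*i+1))) (ss (p (2*i+2))) x))"

definition contact_riemannian ::
  "('m \<Rightarrow> real) set \<Rightarrow> ('m \<Rightarrow> 'v::real_vector set) \<Rightarrow> ('m \<Rightarrow> 'v) set \<Rightarrow> nat
   \<Rightarrow> ('m \<Rightarrow> 'v \<Rightarrow> ('m \<Rightarrow> real) \<Rightarrow> real) \<Rightarrow> (('m \<Rightarrow> 'v) \<Rightarrow> ('m \<Rightarrow> 'v) \<Rightarrow> ('m \<Rightarrow> 'v))
   \<Rightarrow> ('m \<Rightarrow> 'v \<Rightarrow> 'v) \<Rightarrow> ('m \<Rightarrow> 'v) \<Rightarrow> ('m \<Rightarrow> 'v \<Rightarrow> real) \<Rightarrow> ('m \<Rightarrow> 'v \<Rightarrow> 'v \<Rightarrow> real) \<Rightarrow> bool" where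
  "contact_riemannian C Efib Sec m rho br F xi eta g \<longleftrightarrow>
     lie_algebroid C Efib Sec (2*m+1) rho br \<and>
     almost_contact_riemannian C Efib Sec F xi eta g \<and>
     (\<forall>x. \<exists>ss. (\<forall>i<2*m+1. ss i \<in> Sec) \<and> eta_wedge_deta_pow rho br eta m ss x \<noteq> 0) \<and>
     (\<forall>s1\<in>Sec. \<forall>s2\<in>Sec. dE rho br eta s1 s2 = (\<lambda>x. fundamental_form F g x (s1 x) (s2 x)))"

definition lie_eta :: "('m \<Rightarrow> 'v \<Rightarrow> ('m \<Rightarrow> real) \<Rightarrow> real) \<Rightarrow> (('m \<Rightarrow> 'v) \<Rightarrow> ('m \<Rightarrow> 'v) \<Rightarrow> ('m \<Rightarrow> 'v))
   \<Rightarrow> ('m \<Rightarrow> 'v \<Rightarrow> real) \<Rightarrow> ('m \<Rightarrow> 'v) \<Rightarrow> ('m \<Rightarrow> 'v) \<Rightarrow> 'm \<Rightarrow> real" where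
  "lie_eta rho br eta s s' = (\<lambda>x. anc rho s (\<lambda>y. eta y (s' y)) x - eta x (br s s' x))"

definition lie_F :: "(('m \<Rightarrow> 'v::real_vector) \<Rightarrow> ('m \<Rightarrow> 'v) \<Rightarrow> ('m \<Rightarrow> 'v))
   \<Rightarrow> ('m \<Rightarrow> 'v \<Rightarrow> 'v) \<Rightarrow> ('m \<Rightarrow> 'v) \<Rightarrow> ('m \<Rightarrow> 'v) \<Rightarrow> 'm \<Rightarrow> 'v" where
  "lie_F br F s s' = (\<lambda>x. br s (\<lambda>y. F y (s' y)) x - F x (br s s' x))"

definition lie_g :: "('m \<Rightarrow> 'v \<Rightarrow> ('m \<Rightarrow> real) \<Rightarrow> real) \<Rightarrow> (('m \<Rightarrow> 'v) \<Rightarrow> ('m \<Rightarrow> 'v) \<Rightarrow> ('m \<Rightarrow> 'v))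
   \<Rightarrow> ('m \<Rightarrow> 'v \<Rightarrow> 'v \<Rightarrow> real) \<Rightarrow> ('m \<Rightarrow> 'v) \<Rightarrow> ('m \<Rightarrow> 'v) \<Rightarrow> ('m \<Rightarrow> 'v) \<Rightarrow> 'm \<Rightarrow> real" where
  "lie_g rho br g s s1 s2 = (\<lambda>x. anc rho s (\<lambda>y. g y (s1 y) (s2 y)) x
       - g x (br s s1 x) (s2 x) - g x (s1 x) (br s s2 x))"

definition N2 where
  "N2 rho br F eta s1 s2 = (\<lambda>x. lie_eta rho br eta (\<lambda>y. F y (s1 y)) s2 x
                              - lie_eta rho br eta (\<lambda>y. F y (s2 y)) s1 x)"

definition N3 where
  "N3 br F xi s = (\<lambda>x. (1/2::real) *\<^sub>R lie_F br F xi s x)"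

definition N4 where
  "N4 rho br eta xi s = lie_eta rho br eta xi s"

definition E_connection ::
  "('m \<Rightarrow> real) set \<Rightarrow> ('m \<Rightarrow> 'v::real_vector) set \<Rightarrow> ('m \<Rightarrow> 'v \<Rightarrow> ('m \<Rightarrow> real) \<Rightarrow> real)
   \<Rightarrow> (('m \<Rightarrow> 'v) \<Rightarrow> ('m \<Rightarrow> 'v) \<Rightarrow> ('m \<Rightarrow> 'v)) \<Rightarrow> bool" where
  "E_connection C Sec rho nabla \<longleftrightarrow>
     (\<forall>s\<in>Sec. \<forall>s'\<in>Sec. nabla s s' \<in> Sec) \<and>
     (\<forall>s1\<in>Sec. \<forall>s2\<in>Sec. \<forall>s\<in>Sec.
        nabla (\<lambda>x. s1 x + s2 x) s = (\<lambda>x. nabla s1 s x + nabla s2 s x) \<and>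
        nabla s (\<lambda>x. s1 x + s2 x) = (\<lambda>x. nabla s s1 x + nabla s s2 x)) \<and>
     (\<forall>f\<in>C. \<forall>s\<in>Sec. \<forall>s'\<in>Sec.
        nabla (smul f s) s' = smul f (nabla s s') \<and>
        nabla s (smul f s') = (\<lambda>x. f x *\<^sub>R nabla s s' x + anc rho s f x *\<^sub>R s' x))"

definition levi_civita where
  "levi_civita C Sec rho br g nabla \<longleftrightarrow>
     E_connection C Sec rho nabla \<and>
     (\<forall>s1\<in>Sec. \<forall>s2\<in>Sec. (\<lambda>x. nabla s1 s2 x - nabla s2 s1 x) = br s1 s2) \<and>
     (\<forall>s\<in>Sec. \<forall>s1\<in>Sec. \<forall>s2\<in>Sec.
        anc rho s (\<lambda>y. g y (s1 y) (s2 y))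
          = (\<lambda>x. g x (nabla s s1 x) (s2 x) + g x (s1 x) (nabla s s2 x)))"

definition nabla_F where
  "nabla_F nabla F s s' = (\<lambda>x. nabla s (\<lambda>y. F y (s' y)) x - F x (nabla s s' x))"

end

theory Submission
  imports Defs
begin

locale CRL =
  fixes C :: "('m \<Rightarrow> real) set"
    and Efib :: "'m \<Rightarrow> 'v::real_vector set"
    and Sec :: "('m \<Rightarrow> 'v) set"
    and m :: nat
    and rho :: "'m \<Rightarrow> 'v \<Rightarrow> ('m \<Rightarrow> real) \<Rightarrow> real"
    and br :: "('m \<Rightarrow> 'v) \<Rightarrow> ('m \<Rightarrow> 'v) \<Rightarrow> ('m \<Rightarrow> 'v)"
    and F :: "'m \<Rightarrow> 'v \<Rightarrow> 'v" and xi :: "'m \<Rightarrow> 'v"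
    and eta :: "'m \<Rightarrow> 'v \<Rightarrow> real" and g :: "'m \<Rightarrow> 'v \<Rightarrow> 'v \<Rightarrow> real"
    and nabla :: "('m \<Rightarrow> 'v) \<Rightarrow> ('m \<Rightarrow> 'v) \<Rightarrow> ('m \<Rightarrow> 'v)"
  assumes contact: "contact_riemannian C Efib Sec m rho br F xi eta g"
    and LC: "levi_civita C Sec rho br g nabla"
begin

lemma LA: "lie_algebroid C Efib Sec (2*m+1) rho br"
  using contact by (simp add: contact_riemannian_def)
lemma VB: "vector_bundle C Efib Sec (2*m+1)"
  using LA by (simp add: lie_algebroid_def)
lemma ACR: "almost_contact_riemannian C Efib Sec F xi eta g"
  using contact by (simp add: contact_riemannian_def)

lemmas VBu = VB[unfolded vector_bundle_def]
lemmas LAu = LA[unfolded lie_algebroid_def]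
lemmas ACRu = ACR[unfolded almost_contact_riemannian_def]
lemmas LCu = LC[unfolded levi_civita_def E_connection_def]

lemmas VBu1 = VBu[THEN conjunct1]
lemmas VBu2 = VBu[THEN conjunct2, THEN conjunct1]
lemmas VBu3 = VBu[THEN conjunct2, THEN conjunct2, THEN conjunct1]
lemmas VBu4 = VBu[THEN conjunct2, THEN conjunct2, THEN conjunct2, THEN conjunct1]
lemmas VBu5 = VBu[THEN conjunct2, THEN conjunct2, THEN conjunct2, THEN conjunct2, THEN conjunct1]
lemmas VBu6 = VBu[THEN conjunct2, THEN conjunct2, THEN conjunct2, THEN conjunct2, THEN conjunct2, THEN conjunct1]
lemmas VBu7 = VBu[THEN conjunct2, THEN conjunct2, THEN conjunct2, THEN conjunct2, THEN conjunct2, THEN conjunct2, THEN conjunct1]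
lemmas VBu8 = VBu[THEN conjunct2, THEN conjunct2, THEN conjunct2, THEN conjunct2, THEN conjunct2, THEN conjunct2, THEN conjunct2]
lemmas LAu1 = LAu[THEN conjunct1]
lemmas LAu2 = LAu[THEN conjunct2, THEN conjunct1]
lemmas LAu3 = LAu[THEN conjunct2, THEN conjunct2, THEN conjunct1]
lemmas LAu4 = LAu[THEN conjunct2, THEN conjunct2, THEN conjunct2, THEN conjunct1]
lemmas LAu5 = LAu[THEN conjunct2, THEN conjunct2, THEN conjunct2, THEN conjunct2, THEN conjunct1]
lemmas LAu6 = LAu[THEN conjunct2, THEN conjunct2, THEN conjunct2, THEN conjunct2, THEN conjunct2, THEN conjunct1]
lemmas LAu7 = LAu[THEN conjunct2, THEN conjunct2, THEN conjunct2, THEN conjunct2, THEN conjunct2, THEN conjunct2, THEN conjunct1]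
lemmas LAu8 = LAu[THEN conjunct2, THEN conjunct2, THEN conjunct2, THEN conjunct2, THEN conjunct2, THEN conjunct2, THEN conjunct2, THEN conjunct1]
lemmas LAu9 = LAu[THEN conjunct2, THEN conjunct2, THEN conjunct2, THEN conjunct2, THEN conjunct2, THEN conjunct2, THEN conjunct2, THEN conjunct2]
lemmas ACRu1 = ACRu[THEN conjunct1]
lemmas ACRu2 = ACRu[THEN conjunct2, THEN conjunct1]
lemmas ACRu3 = ACRu[THEN conjunct2, THEN conjunct2, THEN conjunct1]
lemmas ACRu4 = ACRu[THEN conjunct2, THEN conjunct2, THEN conjunct2, THEN conjunct1]
lemmas ACRu5 = ACRu[THEN conjunct2, THEN conjunct2, THEN conjunct2, THEN conjunct2, THEN conjunct1]
lemmas ACRu6 = ACRu[THEN conjunct2, THEN conjunct2, THEN conjunct2, THEN conjunct2, THEN conjunct2, THEN conjunct1]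
lemmas ACRu7 = ACRu[THEN conjunct2, THEN conjunct2, THEN conjunct2, THEN conjunct2, THEN conjunct2, THEN conjunct2, THEN conjunct1]
lemmas ACRu8 = ACRu[THEN conjunct2, THEN conjunct2, THEN conjunct2, THEN conjunct2, THEN conjunct2, THEN conjunct2, THEN conjunct2]
lemmas LCc = LCu[THEN conjunct1]
lemmas LCt = LCu[THEN conjunct2, THEN conjunct1]
lemmas LCm = LCu[THEN conjunct2, THEN conjunct2]

lemma C_const: "(\<lambda>_. c) \<in> C"
  using VBu1 by (rule spec)
lemma C_add: "f \<in> C \<Longrightarrow> h \<in> C \<Longrightarrow> (\<lambda>x. f x + h x) \<in> C"
  using VBu2 by blast
lemma C_mult: "f \<in> C \<Longrightarrow> h \<in> C \<Longrightarrow> (\<lambda>x. f x * h x) \<in> C"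
  using VBu2 by blast
lemma C_neg: "f \<in> C \<Longrightarrow> (\<lambda>x. - f x) \<in> C"
  using C_mult[OF C_const[of "-1"]] by simp
lemma fib_sub: "subspace (Efib x)"
  using VBu3 by blast
lemma fib_dim: "dim (Efib x) = 2*m+1"
  using VBu3 by blast
lemma sec_in: "s \<in> Sec \<Longrightarrow> s x \<in> Efib x"
  using VBu4[rule_format] .
lemma sec_add: "s \<in> Sec \<Longrightarrow> s' \<in> Sec \<Longrightarrow> (\<lambda>x. s x + s' x) \<in> Sec"
  using VBu6[rule_format] .
lemma sec_zero: "(\<lambda>_. 0) \<in> Sec"
  using VBu5 .
lemma sec_smul: "f \<in> C \<Longrightarrow> s \<in> Sec \<Longrightarrow> smul f s \<in> Sec"
  using VBu7[rule_format] .
lemma sec_surj: "v \<in> Efib x \<Longrightarrow> \<exists>s\<in>Sec. s x = v"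
  using VBu8[rule_format] .
lemma sec_neg: "s \<in> Sec \<Longrightarrow> (\<lambda>x. - s x) \<in> Sec"
  using sec_smul[OF C_const[of "-1"]] by (simp add: smul_def)
lemma sec_smul': "f \<in> C \<Longrightarrow> s \<in> Sec \<Longrightarrow> (\<lambda>x. f x *\<^sub>R s x) \<in> Sec"
  using sec_smul by (simp add: smul_def)

lemma rho_lin: "v \<in> Efib x \<Longrightarrow> f \<in> C \<Longrightarrow> h \<in> C \<Longrightarrow>
   rho x v (\<lambda>y. a * f y + h y) = a * rho x v f + rho x v h"
  using LAu3 by blast
lemma rho_mult: "v \<in> Efib x \<Longrightarrow> f \<in> C \<Longrightarrow> h \<in> C \<Longrightarrow>
   rho x v (\<lambda>y. f y * h y) = f x * rho x v h + h x * rho x v f"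
  using LAu3 by blast
lemma anc_C: "s \<in> Sec \<Longrightarrow> f \<in> C \<Longrightarrow> anc rho s f \<in> C"
  using LAu4[rule_format] .

lemma br_Sec: "s1 \<in> Sec \<Longrightarrow> s2 \<in> Sec \<Longrightarrow> br s1 s2 \<in> Sec"
  using LAu5[rule_format] .
lemma br_lin1: "s1 \<in> Sec \<Longrightarrow> s2 \<in> Sec \<Longrightarrow> s3 \<in> Sec \<Longrightarrow>
   br (\<lambda>x. a *\<^sub>R s1 x + s2 x) s3 = (\<lambda>x. a *\<^sub>R br s1 s3 x + br s2 s3 x)"
  using LAu6[rule_format] .
lemma br_anti: 
  assumes "s1 \<in> Sec" "s2 \<in> Sec" shows "br s1 s2 x = - br s2 s1 x"
proof -
  have "br s1 s2 = (\<lambda>x. - br s2 s1 x)" using LAu7[rule_format, OF assms] .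
  then show ?thesis by simp
qed
lemma br_jac: 
  assumes a: "s1 \<in> Sec" "s2 \<in> Sec" "s3 \<in> Sec"
  shows "br s1 (br s2 s3) x + br s2 (br s3 s1) x + br s3 (br s1 s2) x = 0"
proof -
  have "(\<lambda>x. br s1 (br s2 s3) x + br s2 (br s3 s1) x + br s3 (br s1 s2) x) = (\<lambda>_. 0)"
    using LAu8[rule_format, OF a] .
  then show ?thesis by (rule fun_cong)
qed
lemma br_leib: 
  assumes "s1 \<in> Sec" "s2 \<in> Sec" "f \<in> C"
  shows "br s1 (smul f s2) x = f x *\<^sub>R br s1 s2 x + anc rho s1 f x *\<^sub>R s2 x"
proof -
  have "br s1 (smul f s2) = (\<lambda>x. f x *\<^sub>R br s1 s2 x + anc rho s1 f x *\<^sub>R s2 x)"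
    using LAu9[rule_format, OF assms] .
  then show ?thesis by simp
qed

lemma F_in: "v \<in> Efib x \<Longrightarrow> F x v \<in> Efib x"
  using ACRu1 by blast
lemma F_lin: "v \<in> Efib x \<Longrightarrow> w \<in> Efib x \<Longrightarrow> F x (a *\<^sub>R v + w) = a *\<^sub>R F x v + F x w"
  using ACRu1 by blast
lemma eta_lin: "v \<in> Efib x \<Longrightarrow> w \<in> Efib x \<Longrightarrow> eta x (a *\<^sub>R v + w) = a * eta x v + eta x w"
  using ACRu1 by blast
lemma g_lin: "v \<in> Efib x \<Longrightarrow> w \<in> Efib x \<Longrightarrow> u \<in> Efib x \<Longrightarrow> g x (a *\<^sub>R v + w) u = a * g x v u + g x w u"
proof -
  assume a: "v \<in> Efib x" "w \<in> Efib x" "u \<in> Efib x"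
  have "\<forall>u\<in>Efib x. g x (a *\<^sub>R v + w) u = a * g x v u + g x w u"
    using ACRu1 a by blast
  then show ?thesis using a(3) by (rule bspec)
qed
lemma g_sym: "v \<in> Efib x \<Longrightarrow> w \<in> Efib x \<Longrightarrow> g x v w = g x w v"
  using ACRu1 by blast
lemma g_pos: "v \<in> Efib x \<Longrightarrow> v \<noteq> 0 \<Longrightarrow> g x v v > 0"
  using ACRu2[rule_format] .
lemma xi_Sec: "xi \<in> Sec"
  using ACRu3 .
lemma F_Sec: "s \<in> Sec \<Longrightarrow> (\<lambda>x. F x (s x)) \<in> Sec"
  using ACRu4 by blast
lemma eta_C: "s \<in> Sec \<Longrightarrow> (\<lambda>x. eta x (s x)) \<in> C"
  using ACRu4 by blast
lemma g_C: "s1 \<in> Sec \<Longrightarrow> s2 \<in> Sec \<Longrightarrow> (\<lambda>x. g x (s1 x) (s2 x)) \<in> C"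
  using ACRu5[rule_format] .
lemma FF: "v \<in> Efib x \<Longrightarrow> F x (F x v) = - v + eta x v *\<^sub>R xi x"
  using ACRu6[rule_format] .
lemma eta_xi: "eta x (xi x) = 1"
  using ACRu7 by (rule spec)
lemma gFF: "v \<in> Efib x \<Longrightarrow> w \<in> Efib x \<Longrightarrow> g x (F x v) (F x w) = g x v w - eta x v * eta x w"
  using ACRu8[rule_format] .
lemma dE_Phi: 
  assumes "s1 \<in> Sec" "s2 \<in> Sec" shows "dE rho br eta s1 s2 x = g x (s1 x) (F x (s2 x))"
proof -
  have c: "\<forall>s1\<in>Sec. \<forall>s2\<in>Sec. dE rho br eta s1 s2 = (\<lambda>x. fundamental_form F g x (s1 x) (s2 x))"
    using contact unfolding contact_riemannian_def by (elim conjE) assumption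
  have "dE rho br eta s1 s2 = (\<lambda>x. fundamental_form F g x (s1 x) (s2 x))"
    using c[rule_format, OF assms] .
  then show ?thesis by (simp add: fundamental_form_def)
qed

lemma nabla_Sec: "s \<in> Sec \<Longrightarrow> s' \<in> Sec \<Longrightarrow> nabla s s' \<in> Sec"
  using LCc[THEN conjunct1, rule_format] .
lemma torsion: 
  assumes "s1 \<in> Sec" "s2 \<in> Sec" shows "br s1 s2 x = nabla s1 s2 x - nabla s2 s1 x"
proof -
  have "(\<lambda>x. nabla s1 s2 x - nabla s2 s1 x) = br s1 s2" using LCt[rule_format, OF assms] .
  then show ?thesis by (metis (mono_tags))
qed
lemma metric: 
  assumes "s \<in> Sec" "s1 \<in> Sec" "s2 \<in> Sec"
  shows "anc rho s (\<lambda>y. g y (s1 y) (s2 y)) x = g x (nabla s s1 x) (s2 x) + g x (s1 x) (nabla s s2 x)"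
proof -
  have "anc rho s (\<lambda>y. g y (s1 y) (s2 y)) = (\<lambda>x. g x (nabla s s1 x) (s2 x) + g x (s1 x) (nabla s s2 x))"
    using LCm[rule_format, OF assms] .
  then show ?thesis by simp
qed

lemma fib0: "0 \<in> Efib x" using fib_sub subspace_0 by blast
lemma fib_add: "v \<in> Efib x \<Longrightarrow> w \<in> Efib x \<Longrightarrow> v + w \<in> Efib x" using fib_sub subspace_add by blast
lemma fib_scale: "v \<in> Efib x \<Longrightarrow> a *\<^sub>R v \<in> Efib x" using fib_sub subspace_scale by blast
lemma fib_neg: "v \<in> Efib x \<Longrightarrow> - v \<in> Efib x" using fib_sub subspace_neg by blast
lemma fib_diff: "v \<in> Efib x \<Longrightarrow> w \<in> Efib x \<Longrightarrow> v - w \<in> Efib x" using fib_sub subspace_diff by blast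

lemma eta_add: "v \<in> Efib x \<Longrightarrow> w \<in> Efib x \<Longrightarrow> eta x (v + w) = eta x v + eta x w"
  using eta_lin[of v x w 1] by simp
lemma eta_scale: "v \<in> Efib x \<Longrightarrow> eta x (a *\<^sub>R v) = a * eta x v"
  using eta_lin[of v x 0 a] eta_lin[of 0 x 0 1] fib0 by simp
lemma eta_neg: "v \<in> Efib x \<Longrightarrow> eta x (- v) = - eta x v"
  using eta_scale[of v x "-1"] by simp
lemma eta_diff: "v \<in> Efib x \<Longrightarrow> w \<in> Efib x \<Longrightarrow> eta x (v - w) = eta x v - eta x w"
  using eta_add[of v x "-w"] eta_neg[of w x] fib_neg by simp

lemma F_add: "v \<in> Efib x \<Longrightarrow> w \<in> Efib x \<Longrightarrow> F x (v + w) = F x v + F x w"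
  using F_lin[of v x w 1] by simp
lemma F_scale: "v \<in> Efib x \<Longrightarrow> F x (a *\<^sub>R v) = a *\<^sub>R F x v"
  using F_lin[of v x 0 a] F_lin[of 0 x 0 1] fib0 by simp
lemma F_neg: "v \<in> Efib x \<Longrightarrow> F x (- v) = - F x v"
  using F_scale[of v x "-1"] by simp
lemma F_diff: "v \<in> Efib x \<Longrightarrow> w \<in> Efib x \<Longrightarrow> F x (v - w) = F x v - F x w"
  using F_add[of v x "-w"] F_neg[of w x] fib_neg by simp

lemma g_add1: "v \<in> Efib x \<Longrightarrow> w \<in> Efib x \<Longrightarrow> u \<in> Efib x \<Longrightarrow> g x (v + w) u = g x v u + g x w u"
  using g_lin[of v x w u 1] by simp
lemma g_scale1: "v \<in> Efib x \<Longrightarrow> u \<in> Efib x \<Longrightarrow> g x (a *\<^sub>R v) u = a * g x v u"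
  using g_lin[of v x 0 u a] g_lin[of 0 x 0 u 1] fib0 by simp
lemma g_neg1: "v \<in> Efib x \<Longrightarrow> u \<in> Efib x \<Longrightarrow> g x (- v) u = - g x v u"
  using g_scale1[of v x u "-1"] by simp
lemma g_diff1: "v \<in> Efib x \<Longrightarrow> w \<in> Efib x \<Longrightarrow> u \<in> Efib x \<Longrightarrow> g x (v - w) u = g x v u - g x w u"
  using g_add1[of v x "-w" u] g_neg1[of w x u] fib_neg by simp
lemma g_add2: "v \<in> Efib x \<Longrightarrow> w \<in> Efib x \<Longrightarrow> u \<in> Efib x \<Longrightarrow> g x u (v + w) = g x u v + g x u w"
  using g_add1[of v x w u] g_sym fib_add by metis
lemma g_scale2: "v \<in> Efib x \<Longrightarrow> u \<in> Efib x \<Longrightarrow> g x u (a *\<^sub>R v) = a * g x u v"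
  using g_scale1[of v x u a] g_sym fib_scale by metis
lemma g_neg2: "v \<in> Efib x \<Longrightarrow> u \<in> Efib x \<Longrightarrow> g x u (- v) = - g x u v"
  using g_scale2[of v x u "-1"] by simp
lemma g_diff2: "v \<in> Efib x \<Longrightarrow> w \<in> Efib x \<Longrightarrow> u \<in> Efib x \<Longrightarrow> g x u (v - w) = g x u v - g x u w"
  using g_add2[of v x "-w" u] g_neg2[of w x u] fib_neg by simp
lemma g_zero1: "u \<in> Efib x \<Longrightarrow> g x 0 u = 0"
  using g_scale1[of 0 x u 0] fib0 by simp
lemma g_zero2: "u \<in> Efib x \<Longrightarrow> g x u 0 = 0"
  using g_scale2[of 0 x u 0] fib0 by simp

lemma xi_in: "xi x \<in> Efib x" using sec_in xi_Sec by blast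
lemma xi_nz: "xi x \<noteq> 0"
proof
  assume "xi x = 0"
  then have "eta x (xi x) = 0" using eta_scale[OF fib0, of x 0] by simp
  then show False using eta_xi by simp
qed

lemma F_xi: "F x (xi x) = 0"
proof -
  let ?u = "F x (xi x)" and ?c = "eta x (F x (xi x))"
  have u_in: "?u \<in> Efib x" using F_in xi_in by blast
  have ffx: "F x ?u = 0" using FF[OF xi_in] eta_xi by simp
  have "F x (F x ?u) = - ?u + ?c *\<^sub>R xi x" using FF[OF u_in] .
  moreover have "F x (F x ?u) = 0" using ffx F_scale[OF fib0, where a=0] by simp
  ultimately have u_eq: "?u = ?c *\<^sub>R xi x" by (simp add: algebra_simps)
  obtain c where c: "F x (xi x) = c *\<^sub>R xi x" using u_eq by blast
  have "F x (c *\<^sub>R xi x) = c *\<^sub>R (c *\<^sub>R xi x)" using F_scale[OF xi_in, where a=c] c by simp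
  then have "(c * c) *\<^sub>R xi x = 0" using ffx c by simp
  then have "c = 0" using xi_nz by simp
  then show ?thesis using c by simp
qed

lemma eta_F: assumes v: "v \<in> Efib x" shows "eta x (F x v) = 0"
proof -
  have fv: "F x v \<in> Efib x" using F_in v by blast
  have "F x (F x (F x v)) = - F x v + eta x (F x v) *\<^sub>R xi x" using FF[OF fv] .
  moreover have "F x (F x (F x v)) = - F x v"
    using FF[OF v] F_add[OF fib_neg[OF v] fib_scale[OF xi_in]] F_neg[OF v] F_scale[OF xi_in] F_xi by simp
  ultimately have "eta x (F x v) *\<^sub>R xi x = 0" by simp
  then show ?thesis using xi_nz by simp
qed

lemma g_xi_xi: "g x (xi x) (xi x) = 1"
  using gFF[OF xi_in xi_in, of x] F_xi eta_xi g_zero1[OF fib0] by simp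

lemma g_xi1: assumes v: "v \<in> Efib x" shows "g x (xi x) v = eta x v"
  using gFF[OF xi_in v] F_xi eta_xi g_zero1[OF F_in[OF v]] by simp
lemma g_xi2: assumes v: "v \<in> Efib x" shows "g x v (xi x) = eta x v"
  using g_xi1[OF v] g_sym[OF v xi_in] by simp

lemma g_skew: assumes v: "v \<in> Efib x" and w: "w \<in> Efib x"
  shows "g x v (F x w) = - g x (F x v) w"
proof -
  have fv: "F x v \<in> Efib x" and fw: "F x w \<in> Efib x" using F_in v w by auto
  have "g x (F x v) (F x (F x w)) = g x v (F x w)" using gFF[OF v fw] eta_F[OF w] by simp
  moreover have "g x (F x v) (F x (F x w)) = - g x (F x v) w"
    using FF[OF w] g_add2[OF fib_neg[OF w] fib_scale[OF xi_in] fv] g_neg2[OF w fv]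
      g_scale2[OF xi_in fv] g_xi2[OF fv] eta_F[OF v] by simp
  ultimately show ?thesis by simp
qed

lemma g_FF2: assumes v: "v \<in> Efib x" and w: "w \<in> Efib x"
  shows "g x v (F x (F x w)) = - g x v w + eta x v * eta x w"
  using FF[OF w] g_add2[OF fib_neg[OF w] fib_scale[OF xi_in] v] g_neg2[OF w v]
      g_scale2[OF xi_in v] g_xi2[OF v] by simp

lemma g_FFFF: assumes v: "v \<in> Efib x" and w: "w \<in> Efib x"
  shows "g x (F x (F x v)) (F x (F x w)) = g x v w - eta x v * eta x w"
  using gFF[OF F_in[OF v] F_in[OF w]] gFF[OF v w] eta_F[OF v] eta_F[OF w] by simp

lemma g_FF_F: assumes v: "v \<in> Efib x" and w: "w \<in> Efib x"
  shows "g x (F x (F x v)) (F x w) = g x (F x v) w"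
  using gFF[OF F_in[OF v] w] eta_F[OF v] by simp

lemma exists_nz: "\<exists>v\<in>Efib x. v \<noteq> 0"
  using dim_le_card[of "Efib x" "{}"] fib_dim[of x] by auto

lemma g_nondeg: assumes v: "v \<in> Efib x" and h: "\<And>s. s \<in> Sec \<Longrightarrow> g x (s x) v = 0"
  shows "v = 0"
proof (rule ccontr)
  assume "v \<noteq> 0"
  then have "g x v v > 0" using g_pos v by blast
  moreover obtain s where "s \<in> Sec" "s x = v" using sec_surj v by blast
  ultimately show False using h by force
qed

lemma anc_app: "anc rho s f x = rho x (s x) f" by (simp add: anc_def)

lemma rho_zero: "v \<in> Efib x \<Longrightarrow> rho x v (\<lambda>_. 0) = 0"
  using rho_mult[of v x "\<lambda>_. 0" "\<lambda>_. 0"] C_const by simp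
lemma rho_const: assumes v: "v \<in> Efib x" shows "rho x v (\<lambda>_. c) = 0"
proof -
  have "rho x v (\<lambda>_. 1) = 0" using rho_mult[OF v C_const C_const, of 1 1] by simp
  then show ?thesis using rho_lin[OF v C_const C_const, of c 1 0] rho_zero[OF v] by simp
qed
lemma rho_add: "v \<in> Efib x \<Longrightarrow> f \<in> C \<Longrightarrow> h \<in> C \<Longrightarrow> rho x v (\<lambda>y. f y + h y) = rho x v f + rho x v h"
  using rho_lin[of v x f h 1] by simp
lemma rho_scale: "v \<in> Efib x \<Longrightarrow> f \<in> C \<Longrightarrow> rho x v (\<lambda>y. a * f y) = a * rho x v f"
  using rho_lin[of v x f "\<lambda>_. 0" a] rho_zero C_const by simp
lemma rho_neg: "v \<in> Efib x \<Longrightarrow> f \<in> C \<Longrightarrow> rho x v (\<lambda>y. - f y) = - rho x v f"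
  using rho_scale[of v x f "-1"] by simp
lemma rho_diff: "v \<in> Efib x \<Longrightarrow> f \<in> C \<Longrightarrow> h \<in> C \<Longrightarrow> rho x v (\<lambda>y. f y - h y) = rho x v f - rho x v h"
  using rho_add[of v x f "\<lambda>y. - h y"] rho_neg[of v x h] C_neg by simp

lemma br_zero1: assumes s: "s \<in> Sec" shows "br (\<lambda>_. 0) s x = 0"
proof -
  have "br (\<lambda>x. 1 *\<^sub>R 0 + 0) s = (\<lambda>x. 1 *\<^sub>R br (\<lambda>_. 0) s x + br (\<lambda>_. 0) s x)"
    using br_lin1[OF sec_zero sec_zero s, where a=1] by simp
  then have "br (\<lambda>_. 0) s x = br (\<lambda>_. 0) s x + br (\<lambda>_. 0) s x" by (metis (no_types) add_0 scale_one)
  then show ?thesis by simp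
qed
lemma br_add1: assumes "s1 \<in> Sec" "s2 \<in> Sec" "s3 \<in> Sec"
  shows "br (\<lambda>x. s1 x + s2 x) s3 x = br s1 s3 x + br s2 s3 x"
  using br_lin1[OF assms, of 1] by simp
lemma br_scale1: assumes "s1 \<in> Sec" "s3 \<in> Sec"
  shows "br (\<lambda>x. a *\<^sub>R s1 x) s3 x = a *\<^sub>R br s1 s3 x"
  using br_lin1[OF assms(1) sec_zero assms(2), of a] br_zero1[OF assms(2)] by simp
lemma br_add2: assumes "s1 \<in> Sec" "s2 \<in> Sec" "s3 \<in> Sec"
  shows "br s3 (\<lambda>x. s1 x + s2 x) x = br s3 s1 x + br s3 s2 x"
proof -
  have "br s3 (\<lambda>x. s1 x + s2 x) x = - br (\<lambda>x. s1 x + s2 x) s3 x"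
    using br_anti[OF assms(3) sec_add[OF assms(1,2)]] .
  also have "\<dots> = - br s1 s3 x - br s2 s3 x" using br_add1[OF assms] by simp
  also have "\<dots> = br s3 s1 x + br s3 s2 x" using br_anti[OF assms(3) assms(1)] br_anti[OF assms(3) assms(2)] by simp
  finally show ?thesis .
qed
lemma br_neg2: assumes "s1 \<in> Sec" "s3 \<in> Sec"
  shows "br s3 (\<lambda>x. - s1 x) x = - br s3 s1 x"
proof -
  have "br s3 (\<lambda>x. - s1 x) x = - br (\<lambda>x. - s1 x) s3 x"
    using br_anti[OF assms(2) sec_neg[OF assms(1)]] .
  also have "\<dots> = br s1 s3 x" using br_scale1[OF assms, of "-1"] by simp
  also have "\<dots> = - br s3 s1 x" using br_anti[OF assms] by simp
  finally show ?thesis .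
qed

lemma anchor_hom:
  assumes s1: "s1 \<in> Sec" and s2: "s2 \<in> Sec" and f: "f \<in> C"
  shows "anc rho s1 (anc rho s2 f) x - anc rho s2 (anc rho s1 f) x = anc rho (br s1 s2) f x"
proof -
  obtain v where v: "v \<in> Efib x" "v \<noteq> 0" using exists_nz by blast
  obtain s3 where s3: "s3 \<in> Sec" "s3 x = v" using sec_surj v by blast
  define t where "t = smul f s3"
  have t: "t \<in> Sec" using sec_smul f s3 t_def by simp
  have f1: "anc rho s1 f \<in> C" "anc rho s2 f \<in> C" using anc_C s1 s2 f by auto
  have S: "smul f (br s2 s3) \<in> Sec" "smul (anc rho s2 f) s3 \<in> Sec"
       "smul f (br s1 s3) \<in> Sec" "smul (anc rho s1 f) s3 \<in> Sec"
    using sec_smul br_Sec f f1 s1 s2 s3 by auto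
  have e2: "br s2 t = (\<lambda>y. smul f (br s2 s3) y + smul (anc rho s2 f) s3 y)"
    unfolding t_def by (rule ext, subst br_leib[OF s2 s3(1) f], simp add: smul_def)
  have e1: "br s1 t = (\<lambda>y. smul f (br s1 s3) y + smul (anc rho s1 f) s3 y)"
    unfolding t_def by (rule ext, subst br_leib[OF s1 s3(1) f], simp add: smul_def)
  have A: "br s1 (br s2 t) x = f x *\<^sub>R br s1 (br s2 s3) x + anc rho s1 f x *\<^sub>R br s2 s3 x
      + (anc rho s2 f x *\<^sub>R br s1 s3 x + anc rho s1 (anc rho s2 f) x *\<^sub>R s3 x)"
    unfolding e2 br_add2[OF S(1,2) s1] br_leib[OF s1 br_Sec[OF s2 s3(1)] f] br_leib[OF s1 s3(1) f1(2)] ..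
  have ets1: "br t s1 = (\<lambda>y. - br s1 t y)" by (rule ext) (rule br_anti[OF t s1])
  have B: "br s2 (br t s1) x = - (f x *\<^sub>R br s2 (br s1 s3) x + anc rho s2 f x *\<^sub>R br s1 s3 x
      + (anc rho s1 f x *\<^sub>R br s2 s3 x + anc rho s2 (anc rho s1 f) x *\<^sub>R s3 x))"
    unfolding ets1 br_neg2[OF br_Sec[OF s1 t] s2] unfolding e1 br_add2[OF S(3,4) s2]
      br_leib[OF s2 br_Sec[OF s1 s3(1)] f] br_leib[OF s2 s3(1) f1(1)] ..
  have Cc: "br t (br s1 s2) x = - (f x *\<^sub>R br (br s1 s2) s3 x + anc rho (br s1 s2) f x *\<^sub>R s3 x)"
    unfolding br_anti[OF t br_Sec[OF s1 s2]] unfolding t_def br_leib[OF br_Sec[OF s1 s2] s3(1) f] ..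
  have J1: "br s1 (br s2 t) x + br s2 (br t s1) x + br t (br s1 s2) x = 0" using br_jac[OF s1 s2 t] .
  have e31: "br s3 s1 = (\<lambda>y. - br s1 s3 y)" by (rule ext) (rule br_anti[OF s3(1) s1])
  have J2: "br s1 (br s2 s3) x - br s2 (br s1 s3) x - br (br s1 s2) s3 x = 0"
    using br_jac[OF s1 s2 s3(1), of x] br_neg2[OF br_Sec[OF s1 s3(1)] s2, of x]
      br_anti[OF s3(1) br_Sec[OF s1 s2], of x] unfolding e31 by simp
  have "(anc rho s1 (anc rho s2 f) x - anc rho s2 (anc rho s1 f) x - anc rho (br s1 s2) f x) *\<^sub>R s3 x
     = (br s1 (br s2 t) x + br s2 (br t s1) x + br t (br s1 s2) x)
       - f x *\<^sub>R (br s1 (br s2 s3) x - br s2 (br s1 s3) x - br (br s1 s2) s3 x)"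
    unfolding A B Cc by (simp add: algebra_simps)
  also have "\<dots> = 0" using J1 J2 by simp
  finally show ?thesis using s3 v by simp
qed

abbreviation Fs where "Fs s \<equiv> (\<lambda>y. F y (s y))"
abbreviation Es where "Es s \<equiv> (\<lambda>y. eta y (s y))"

definition aa where "aa Y W x = g x (nabla Y xi x) (W x)"
definition bb where "bb Y W x = g x (Y x) (nabla xi (Fs W) x) - g x (Y x) (F x (nabla xi W x))"

lemma Es_xi: "Es xi = (\<lambda>_. 1)" using eta_xi by (rule ext)
lemma Es_F: "s \<in> Sec \<Longrightarrow> Es (Fs s) = (\<lambda>_. 0)" by (rule ext) (simp add: eta_F sec_in)
lemma Es_g: "s \<in> Sec \<Longrightarrow> Es s = (\<lambda>y. g y (xi y) (s y))" by (rule ext) (simp add: g_xi1 sec_in)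

lemma dE_exp: "dE rho br eta s1 s2 x = (1/2) * (anc rho s1 (Es s2) x - anc rho s2 (Es s1) x - eta x (br s1 s2 x))"
  by (simp add: dE_def)

lemma N4_pt: assumes s: "s \<in> Sec" shows "lie_eta rho br eta xi s x = 0"
proof -
  have "dE rho br eta xi s x = g x (xi x) (F x (s x))" using dE_Phi[OF xi_Sec s] .
  also have "\<dots> = 0" using g_xi1[OF F_in[OF sec_in[OF s]]] eta_F[OF sec_in[OF s]] by simp
  finally have "dE rho br eta xi s x = 0" .
  moreover have "anc rho s (Es xi) x = 0" unfolding Es_xi anc_app using rho_const sec_in[OF s] by blast
  ultimately show ?thesis unfolding dE_exp lie_eta_def by simp
qed

lemma N2_aux: assumes s1: "s1 \<in> Sec" and s2: "s2 \<in> Sec"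
  shows "lie_eta rho br eta (Fs s1) s2 x = 2 * g x (F x (s1 x)) (F x (s2 x))"
proof -
  have "dE rho br eta (Fs s1) s2 x = g x (F x (s1 x)) (F x (s2 x))" using dE_Phi[OF F_Sec[OF s1] s2] by simp
  moreover have "anc rho s2 (Es (Fs s1)) x = 0" unfolding Es_F[OF s1] anc_app using rho_const sec_in[OF s2] by blast
  ultimately show ?thesis unfolding dE_exp lie_eta_def by simp
qed

lemma a_xi: assumes Y: "Y \<in> Sec" shows "aa Y xi x = 0"
proof -
  have "anc rho Y (\<lambda>y. g y (xi y) (xi y)) x = 2 * g x (nabla Y xi x) (xi x)"
    using metric[OF Y xi_Sec xi_Sec, of x] g_sym[OF xi_in sec_in[OF nabla_Sec[OF Y xi_Sec]]] by simp
  moreover have "(\<lambda>y. g y (xi y) (xi y)) = (\<lambda>_. 1)" using g_xi_xi by (rule ext)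
  ultimately show ?thesis unfolding aa_def anc_app using rho_const sec_in[OF Y] by simp
qed

lemma F1: assumes Y: "Y \<in> Sec" and W: "W \<in> Sec"
  shows "aa Y W x - aa W Y x = 2 * g x (Y x) (F x (W x))"
proof -
  have n1: "nabla Y W x \<in> Efib x" "nabla W Y x \<in> Efib x" using sec_in nabla_Sec Y W by auto
  have m1: "anc rho Y (Es W) x = aa Y W x + eta x (nabla Y W x)"
    unfolding Es_g[OF W] metric[OF Y xi_Sec W] aa_def using g_xi1[OF n1(1)] by simp
  have m2: "anc rho W (Es Y) x = aa W Y x + eta x (nabla W Y x)"
    unfolding Es_g[OF Y] metric[OF W xi_Sec Y] aa_def using g_xi1[OF n1(2)] by simp
  have m3: "eta x (br Y W x) = eta x (nabla Y W x) - eta x (nabla W Y x)"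
    unfolding torsion[OF Y W] using eta_diff[OF n1] .
  show ?thesis using dE_Phi[OF Y W, of x] unfolding dE_exp m1 m2 m3 by simp
qed

lemma nabla_xi_xi: "nabla xi xi x = 0"
proof (rule g_nondeg)
  show "nabla xi xi x \<in> Efib x" using sec_in nabla_Sec xi_Sec by blast
  fix s assume s: "s \<in> Sec"
  have "aa xi s x = 0" using F1[OF xi_Sec s, of x] a_xi[OF s, of x]
      g_xi1[OF F_in[OF sec_in[OF s]]] eta_F[OF sec_in[OF s]] by simp
  then show "g x (s x) (nabla xi xi x) = 0" unfolding aa_def
    using g_sym[OF sec_in[OF s]] sec_in nabla_Sec xi_Sec by metis
qed

lemma anc_dE: assumes s: "s \<in> Sec" and Y: "Y \<in> Sec" and Z: "Z \<in> Sec"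
  shows "anc rho s (dE rho br eta Y Z) x = (1/2) * (anc rho s (anc rho Y (Es Z)) x
     - anc rho s (anc rho Z (Es Y)) x - anc rho s (Es (br Y Z)) x)"
proof -
  have c1: "anc rho Y (Es Z) \<in> C" "anc rho Z (Es Y) \<in> C" "Es (br Y Z) \<in> C"
    using anc_C eta_C br_Sec Y Z by auto
  have c2: "(\<lambda>y. anc rho Y (Es Z) y - anc rho Z (Es Y) y) \<in> C"
    using C_add[OF c1(1) C_neg[OF c1(2)]] by simp
  have c3: "(\<lambda>y. anc rho Y (Es Z) y - anc rho Z (Es Y) y - Es (br Y Z) y) \<in> C"
    using C_add[OF c2 C_neg[OF c1(3)]] by simp
  have e: "dE rho br eta Y Z = (\<lambda>y. (1/2) * (anc rho Y (Es Z) y - anc rho Z (Es Y) y - Es (br Y Z) y))"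
    by (rule ext) (simp add: dE_exp)
  have v: "s x \<in> Efib x" using sec_in s .
  show ?thesis unfolding e anc_def[of rho s]
    using rho_scale[OF v c3, of "1/2"] rho_diff[OF v c2 c1(3)] rho_diff[OF v c1(1,2)] by simp
qed

lemma Lxi_dE: assumes Y: "Y \<in> Sec" and Z: "Z \<in> Sec"
  shows "anc rho xi (dE rho br eta Y Z) x - dE rho br eta (br xi Y) Z x - dE rho br eta Y (br xi Z) x = 0"
proof -
  have xY: "br xi Y \<in> Sec" and xZ: "br xi Z \<in> Sec" and YZ: "br Y Z \<in> Sec" using br_Sec xi_Sec Y Z by auto
  have N4f: "\<And>W. W \<in> Sec \<Longrightarrow> anc rho xi (Es W) = Es (br xi W)"
    by (rule ext) (use N4_pt in \<open>simp add: lie_eta_def\<close>)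
  have h1: "anc rho xi (anc rho Y (Es Z)) x - anc rho Y (Es (br xi Z)) x = anc rho (br xi Y) (Es Z) x"
    using anchor_hom[OF xi_Sec Y eta_C[OF Z], of x] N4f[OF Z] by simp
  have h2: "anc rho xi (anc rho Z (Es Y)) x - anc rho Z (Es (br xi Y)) x = anc rho (br xi Z) (Es Y) x"
    using anchor_hom[OF xi_Sec Z eta_C[OF Y], of x] N4f[OF Y] by simp
  have h3: "anc rho xi (Es (br Y Z)) x = eta x (br xi (br Y Z) x)"
    using N4f[OF YZ] by simp
  have e31: "br Z xi = (\<lambda>y. - br xi Z y)" by (rule ext) (rule br_anti[OF Z xi_Sec])
  have jv: "br xi (br Y Z) x = br (br xi Y) Z x + br Y (br xi Z) x"
    using br_jac[OF xi_Sec Y Z, of x] br_neg2[OF xZ Y, of x] br_anti[OF Z xY, of x]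
    unfolding e31 by (simp add: algebra_simps)
  have h4: "eta x (br xi (br Y Z) x) = eta x (br (br xi Y) Z x) + eta x (br Y (br xi Z) x)"
    unfolding jv using eta_add sec_in br_Sec xY xZ Y Z by blast
  show ?thesis unfolding anc_dE[OF xi_Sec Y Z] dE_exp unfolding h1[symmetric] h2[symmetric] h3 h4 by (simp add: algebra_simps)
qed

lemma L_b: assumes Y: "Y \<in> Sec" and Z: "Z \<in> Sec"
  shows "bb Y Z x = - aa Y (Fs Z) x + aa Z (Fs Y) x"
proof -
  have Yx: "Y x \<in> Efib x" and Zx: "Z x \<in> Efib x" using sec_in Y Z by auto
  have n: "nabla xi Y x \<in> Efib x" "nabla Y xi x \<in> Efib x" "nabla xi Z x \<in> Efib x" "nabla Z xi x \<in> Efib x"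
    using sec_in nabla_Sec xi_Sec Y Z by auto
  have ePhi: "dE rho br eta Y Z = (\<lambda>y. g y (Y y) (F y (Z y)))" by (rule ext) (rule dE_Phi[OF Y Z])
  have l: "anc rho xi (\<lambda>y. g y (Y y) (F y (Z y))) x - g x (br xi Y x) (F x (Z x)) - g x (Y x) (F x (br xi Z x)) = 0"
    using Lxi_dE[OF Y Z, of x] unfolding ePhi dE_Phi[OF br_Sec[OF xi_Sec Y] Z] dE_Phi[OF Y br_Sec[OF xi_Sec Z]] .
  have m: "anc rho xi (\<lambda>y. g y (Y y) (F y (Z y))) x = g x (nabla xi Y x) (F x (Z x)) + g x (Y x) (nabla xi (Fs Z) x)"
    using metric[OF xi_Sec Y F_Sec[OF Z]] by simp
  have t1: "g x (br xi Y x) (F x (Z x)) = g x (nabla xi Y x) (F x (Z x)) - aa Y (Fs Z) x"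
    unfolding torsion[OF xi_Sec Y] aa_def using g_diff1[OF n(1,2) F_in[OF Zx]] by simp
  have t2: "g x (Y x) (F x (br xi Z x)) = g x (Y x) (F x (nabla xi Z x)) + aa Z (Fs Y) x"
    unfolding torsion[OF xi_Sec Z] aa_def F_diff[OF n(3,4)]
    using g_diff2[OF F_in[OF n(3)] F_in[OF n(4)] Yx] g_skew[OF Yx n(4)] g_sym[OF F_in[OF Yx] n(4)] by simp
  show ?thesis using l m t1 t2 unfolding bb_def by simp
qed

lemma anc_Es_xi: assumes Z: "Z \<in> Sec" shows "anc rho xi (Es Z) x = eta x (nabla xi Z x)"
  unfolding Es_g[OF Z] metric[OF xi_Sec xi_Sec Z] nabla_xi_xi
  using g_zero1[OF sec_in[OF Z]] g_xi1 sec_in nabla_Sec xi_Sec Z by simp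

lemma Anti: assumes Y: "Y \<in> Sec" and Z: "Z \<in> Sec"
  shows "bb Y (Fs Z) x = bb (Fs Y) Z x"
proof -
  have Yx: "Y x \<in> Efib x" and Zx: "Z x \<in> Efib x" using sec_in Y Z by auto
  have FZ: "Fs Z \<in> Sec" and FFZ: "Fs (Fs Z) \<in> Sec" and FY: "Fs Y \<in> Sec" using F_Sec Y Z by auto
  have n: "nabla xi Y x \<in> Efib x" "nabla xi Z x \<in> Efib x" "nabla xi (Fs Z) x \<in> Efib x"
    using sec_in nabla_Sec xi_Sec Y Z FZ by auto
  have fe: "(\<lambda>y. g y (Y y) (F y (F y (Z y)))) = (\<lambda>y. - g y (Y y) (Z y) + Es Y y * Es Z y)"
    by (rule ext) (simp add: g_FF2 sec_in Y Z)
  have cc: "(\<lambda>y. g y (Y y) (Z y)) \<in> C" "Es Y \<in> C" "Es Z \<in> C" using g_C eta_C Y Z by auto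
  have cm: "(\<lambda>y. Es Y y * Es Z y) \<in> C" using C_mult cc by blast
  have a1: "anc rho xi (\<lambda>y. g y (Y y) (F y (F y (Z y)))) x
     = - anc rho xi (\<lambda>y. g y (Y y) (Z y)) x + (eta x (Y x) * anc rho xi (Es Z) x + eta x (Z x) * anc rho xi (Es Y) x)"
    unfolding fe anc_def[of rho xi]
    using rho_add[OF xi_in C_neg[OF cc(1)] cm] rho_neg[OF xi_in cc(1)] rho_mult[OF xi_in cc(2,3)] by simp
  have a2: "anc rho xi (\<lambda>y. g y (Y y) (F y (F y (Z y)))) x
      = g x (nabla xi Y x) (F x (F x (Z x))) + g x (Y x) (nabla xi (Fs (Fs Z)) x)"
    using metric[OF xi_Sec Y FFZ] by simp
  have a3: "anc rho xi (\<lambda>y. g y (Y y) (Z y)) x = g x (nabla xi Y x) (Z x) + g x (Y x) (nabla xi Z x)"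
    using metric[OF xi_Sec Y Z] .
  have a4: "g x (nabla xi Y x) (F x (F x (Z x))) = - g x (nabla xi Y x) (Z x) + eta x (nabla xi Y x) * eta x (Z x)"
    using g_FF2[OF n(1) Zx] .
  have a5: "g x (Y x) (F x (nabla xi (Fs Z) x)) = - g x (F x (Y x)) (nabla xi (Fs Z) x)"
    using g_skew[OF Yx n(3)] .
  have a6: "g x (F x (Y x)) (F x (nabla xi Z x)) = g x (Y x) (nabla xi Z x) - eta x (Y x) * eta x (nabla xi Z x)"
    using gFF[OF Yx n(2)] .
  show ?thesis unfolding bb_def using a1 a2 a3 a4 a5 a6 anc_Es_xi[OF Y, of x] anc_Es_xi[OF Z, of x]
    by simp
qed

lemma lin2: assumes Y: "Y \<in> Sec" and Z: "Z \<in> Sec"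
  shows "aa Y (Fs (Fs Z)) x = - aa Y Z x"
proof -
  have n: "nabla Y xi x \<in> Efib x" using sec_in nabla_Sec xi_Sec Y by auto
  have "eta x (nabla Y xi x) = 0" using a_xi[OF Y, of x] g_xi2[OF n] unfolding aa_def by simp
  then show ?thesis unfolding aa_def using g_FF2[OF n sec_in[OF Z]] by simp
qed

lemma E1: assumes Y: "Y \<in> Sec" and Z: "Z \<in> Sec"
  shows "aa Y Z x + aa (Fs Z) (Fs Y) x + aa (Fs Y) (Fs Z) x + aa Z Y x = 0"
  using Anti[OF Y Z, of x] L_b[OF Y F_Sec[OF Z], of x] L_b[OF F_Sec[OF Y] Z, of x]
    lin2[OF Y Z, of x] lin2[OF Z Y, of x] by simp

lemma E2: assumes Y: "Y \<in> Sec" and Z: "Z \<in> Sec"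
  shows "aa Y (Fs Z) x - aa (Fs Y) Z x = - 2 * (g x (Y x) (Z x) - eta x (Y x) * eta x (Z x))"
proof -
  have Yx: "Y x \<in> Efib x" and Zx: "Z x \<in> Efib x" using sec_in Y Z by auto
  have FZ: "Fs Z \<in> Sec" and FFZ: "Fs (Fs Z) \<in> Sec" and FY: "Fs Y \<in> Sec" using F_Sec Y Z by auto
  have "aa (Fs (Fs Z)) (Fs Y) x - aa (Fs Y) (Fs (Fs Z)) x = 2 * (g x (Z x) (Y x) - eta x (Z x) * eta x (Y x))"
    using F1[OF FFZ FY, of x] g_FFFF[OF Zx Yx] by simp
  moreover have "aa Y (Fs Z) x - aa (Fs Z) Y x = 2 * (- g x (Y x) (Z x) + eta x (Y x) * eta x (Z x))"
    using F1[OF Y FZ, of x] g_FF2[OF Yx Zx] by simp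
  ultimately show ?thesis using E1[OF Y FZ, of x] lin2[OF FY Z, of x] g_sym[OF Yx Zx] mult.commute[of "eta x (Z x)" "eta x (Y x)"] by (smt (verit))
qed

lemma bb_zero: assumes Y: "Y \<in> Sec" and Z: "Z \<in> Sec" shows "bb Y Z x = 0"
proof -
  have Yx: "Y x \<in> Efib x" and Zx: "Z x \<in> Efib x" using sec_in Y Z by auto
  have "aa Z (Fs Y) x - aa (Fs Y) Z x = 2 * (- g x (Z x) (Y x) + eta x (Z x) * eta x (Y x))"
    using F1[OF Z F_Sec[OF Y], of x] g_FF2[OF Zx Yx] by simp
  then show ?thesis using L_b[OF Y Z, of x] E2[OF Y Z, of x] g_sym[OF Yx Zx] mult.commute[of "eta x (Z x)" "eta x (Y x)"] by (smt (verit))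
qed

lemma nablaF_zero: assumes Z: "Z \<in> Sec" shows "nabla_F nabla F xi Z x = 0"
proof -
  have v: "nabla xi (Fs Z) x - F x (nabla xi Z x) \<in> Efib x"
    using fib_diff sec_in nabla_Sec F_in xi_Sec F_Sec Z by metis
  have "nabla xi (Fs Z) x - F x (nabla xi Z x) = 0"
  proof (rule g_nondeg[OF v])
    fix s assume s: "s \<in> Sec"
    show "g x (s x) (nabla xi (Fs Z) x - F x (nabla xi Z x)) = 0"
      using bb_zero[OF s Z, of x] g_diff2 sec_in nabla_Sec F_in xi_Sec F_Sec Z s unfolding bb_def by metis
  qed
  then show ?thesis by (simp add: nabla_F_def)
qed

lemma lie_g_eq: assumes Y: "Y \<in> Sec" and Z: "Z \<in> Sec"
  shows "lie_g rho br g xi Y Z x = aa Y Z x + aa Z Y x"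
proof -
  have Yx: "Y x \<in> Efib x" and Zx: "Z x \<in> Efib x" using sec_in Y Z by auto
  have n: "nabla xi Y x \<in> Efib x" "nabla Y xi x \<in> Efib x" "nabla xi Z x \<in> Efib x" "nabla Z xi x \<in> Efib x"
    using sec_in nabla_Sec xi_Sec Y Z by auto
  show ?thesis unfolding lie_g_def metric[OF xi_Sec Y Z] torsion[OF xi_Sec Y] torsion[OF xi_Sec Z] aa_def
    using g_diff1[OF n(1,2) Zx] g_diff2[OF n(3,4) Yx] g_sym[OF Yx n(4)] by simp
qed

lemma lieF_in: assumes Z: "Z \<in> Sec" shows "lie_F br F xi Z x \<in> Efib x"
  unfolding lie_F_def using fib_diff sec_in br_Sec F_in xi_Sec F_Sec Z by metis

lemma hprime: assumes Y: "Y \<in> Sec" and Z: "Z \<in> Sec"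
  shows "g x (Y x) (lie_F br F xi Z x) = - (aa (Fs Y) Z x + aa Z (Fs Y) x)"
proof -
  have Yx: "Y x \<in> Efib x" and Zx: "Z x \<in> Efib x" using sec_in Y Z by auto
  have FZ: "Fs Z \<in> Sec" using F_Sec Z by auto
  have n: "nabla xi (Fs Z) x \<in> Efib x" "nabla (Fs Z) xi x \<in> Efib x" "nabla xi Z x \<in> Efib x" "nabla Z xi x \<in> Efib x"
    using sec_in nabla_Sec xi_Sec FZ Z by auto
  have e: "g x (Y x) (lie_F br F xi Z x) = bb Y Z x - aa (Fs Z) Y x - aa Z (Fs Y) x"
    unfolding lie_F_def torsion[OF xi_Sec FZ] torsion[OF xi_Sec Z] F_diff[OF n(3,4)] bb_def aa_def
    using g_diff2[OF fib_diff[OF n(1,2)] fib_diff[OF F_in[OF n(3)] F_in[OF n(4)]] Yx]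
      g_diff2[OF n(1,2) Yx] g_diff2[OF F_in[OF n(3)] F_in[OF n(4)] Yx]
      g_sym[OF Yx n(2)] g_skew[OF Yx n(4)] g_sym[OF F_in[OF Yx] n(4)] by simp
  have "aa (Fs Z) Y x = aa (Fs Y) Z x"
    using F1[OF Y FZ, of x] g_FF2[OF Yx Zx] E2[OF Y Z, of x] by simp
  then show ?thesis using e bb_zero[OF Y Z, of x] by simp
qed

lemma part_ii:
  "(\<forall>s\<in>Sec. N3 br F xi s = (\<lambda>_. 0)) \<longleftrightarrow> (\<forall>s1\<in>Sec. \<forall>s2\<in>Sec. lie_g rho br g xi s1 s2 = (\<lambda>_. 0))"
proof
  assume h: "\<forall>s\<in>Sec. N3 br F xi s = (\<lambda>_. 0)"
  have hz: "\<And>Z x. Z \<in> Sec \<Longrightarrow> lie_F br F xi Z x = 0"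
  proof -
    fix Z x assume Z: "Z \<in> Sec"
    have "N3 br F xi Z x = 0" using h Z by simp
    then show "lie_F br F xi Z x = 0" by (simp add: N3_def)
  qed
  show "\<forall>s1\<in>Sec. \<forall>s2\<in>Sec. lie_g rho br g xi s1 s2 = (\<lambda>_. 0)"
  proof (intro ballI ext)
    fix W Z x assume W: "W \<in> Sec" and Z: "Z \<in> Sec"
    have Wx: "W x \<in> Efib x" and Zx: "Z x \<in> Efib x" using sec_in W Z by auto
    have FW: "Fs W \<in> Sec" and FFW: "Fs (Fs W) \<in> Sec" using F_Sec W by auto
    have "aa (Fs (Fs W)) Z x + aa Z (Fs (Fs W)) x = 0"
      using hprime[OF FW Z, of x] hz[OF Z, of x] g_zero2[OF F_in[OF Wx]] by simp
    moreover have "aa (Fs (Fs W)) Z x - aa Z (Fs (Fs W)) x = 2 * g x (F x (W x)) (Z x)"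
      using F1[OF FFW Z, of x] g_FF_F[OF Wx F_in[OF Zx]] g_FF_F[OF Wx Zx] gFF[OF F_in[OF Wx] Zx] eta_F[OF Wx]
      by simp
    moreover have "aa W Z x - aa Z W x = - 2 * g x (F x (W x)) (Z x)"
      using F1[OF W Z, of x] g_skew[OF Wx Zx] by simp
    ultimately show "lie_g rho br g xi W Z x = 0"
      using lie_g_eq[OF W Z, of x] lin2[OF Z W, of x] by simp
  qed
next
  assume h: "\<forall>s1\<in>Sec. \<forall>s2\<in>Sec. lie_g rho br g xi s1 s2 = (\<lambda>_. 0)"
  show "\<forall>s\<in>Sec. N3 br F xi s = (\<lambda>_. 0)"
  proof (intro ballI ext)
    fix Z x assume Z: "Z \<in> Sec"
    have "lie_F br F xi Z x = 0"
    proof (rule g_nondeg[OF lieF_in[OF Z]])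
      fix Y assume Y: "Y \<in> Sec"
      have "lie_g rho br g xi (Fs Y) Z x = 0" using h F_Sec[OF Y] Z by simp
      then show "g x (Y x) (lie_F br F xi Z x) = 0"
        using hprime[OF Y Z, of x] lie_g_eq[OF F_Sec[OF Y] Z, of x] by simp
    qed
    then show "N3 br F xi Z x = 0" by (simp add: N3_def)
  qed
qed

end

theorem proposition4p2:
  fixes C :: "('m \<Rightarrow> real) set"
    and Efib :: "'m \<Rightarrow> 'v::real_vector set"
    and Sec :: "('m \<Rightarrow> 'v) set"
    and m :: nat
    and rho :: "'m \<Rightarrow> 'v \<Rightarrow> ('m \<Rightarrow> real) \<Rightarrow> real"
    and br :: "('m \<Rightarrow> 'v) \<Rightarrow> ('m \<Rightarrow> 'v) \<Rightarrow> ('m \<Rightarrow> 'v)"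
    and F :: "'m \<Rightarrow> 'v \<Rightarrow> 'v" and xi :: "'m \<Rightarrow> 'v"
    and eta :: "'m \<Rightarrow> 'v \<Rightarrow> real" and g :: "'m \<Rightarrow> 'v \<Rightarrow> 'v \<Rightarrow> real"
    and nabla :: "('m \<Rightarrow> 'v) \<Rightarrow> ('m \<Rightarrow> 'v) \<Rightarrow> ('m \<Rightarrow> 'v)"
  assumes contact: "contact_riemannian C Efib Sec m rho br F xi eta g"
    and LC: "levi_civita C Sec rho br g nabla"
  shows "((\<forall>s1\<in>Sec. \<forall>s2\<in>Sec. N2 rho br F eta s1 s2 = (\<lambda>_. 0)) \<and>
          (\<forall>s\<in>Sec. N4 rho br eta xi s = (\<lambda>_. 0)))
       \<and> ((\<forall>s\<in>Sec. N3 br F xi s = (\<lambda>_. 0)) \<longleftrightarrow>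
          (\<forall>s1\<in>Sec. \<forall>s2\<in>Sec. lie_g rho br g xi s1 s2 = (\<lambda>_. 0)))
       \<and> (\<forall>s\<in>Sec. nabla_F nabla F xi s = (\<lambda>_. 0))"
proof -
  interpret CRL C Efib Sec m rho br F xi eta g nabla using contact LC by unfold_locales
  have n2: "\<forall>s1\<in>Sec. \<forall>s2\<in>Sec. N2 rho br F eta s1 s2 = (\<lambda>_. 0)"
  proof (intro ballI ext)
    fix s1 s2 x assume s1: "s1 \<in> Sec" and s2: "s2 \<in> Sec"
    show "N2 rho br F eta s1 s2 x = 0"
      unfolding N2_def using N2_aux[OF s1 s2, of x] N2_aux[OF s2 s1, of x]
        g_sym[OF F_in[OF sec_in[OF s1]] F_in[OF sec_in[OF s2]]] by simp
  qed
  have n4: "\<forall>s\<in>Sec. N4 rho br eta xi s = (\<lambda>_. 0)"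
    by (intro ballI ext) (simp add: N4_def N4_pt)
  have n5: "\<forall>s\<in>Sec. nabla_F nabla F xi s = (\<lambda>_. 0)"
    by (intro ballI ext) (simp add: nablaF_zero)
  show ?thesis using n2 n4 n5 part_ii by blast
qed

end
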